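(* Fix $m\ge1$ and $\rho>0$. For a partition $\kappa$ with at most $m$ parts, regarded as $(\kappa_1,\dots,\kappa_m,0,\dots,0)\in\mathbb Z^n$, let $\delta_\kappa:=\prod_{1\le i<j\le n}\frac{\kappa_i-\kappa_j+j-i}{j-i}$. If $n\to+\infty$ and $k\to+\infty$ with $n/(2k)\to\rho^{-1}$, then $$\limsup\frac1n\log\Big(\sum_{|\kappa|=2k,\ \ell(\kappa)\le m}\delta_\kappa\Big)\le m\big((1+\rho)\log(1+\rho)-\rho\log\rho\big),$$ where the sum is over partitions of $2k$ with at most $m$ nonzero parts.
   Context: $\delta_\kappa$ is the dimension of the irreducible polynomial representation $F_n^\kappa$ of $GL(n)$ with highest weight $\kappa$. $\ell(\kappa)$ is the number of nonzero parts of $\kappa$. Logarithms are natural. *)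

theory Defs
  imports "HOL-Analysis.Analysis"
begin

text \<open>Partitions of N with at most m nonzero parts, represented as weakly decreasing
  sequences kappa :: nat => nat (0-indexed: kappa 0 >= kappa 1 >= ...) with
  kappa i = 0 for i >= m and total size N.\<close>
definition partitions_le :: "nat \<Rightarrow> nat \<Rightarrow> (nat \<Rightarrow> nat) set" where
  "partitions_le m N = {\<kappa>. (\<forall>i j. i \<le> j \<longrightarrow> \<kappa> j \<le> \<kappa> i) \<and> (\<forall>i\<ge>m. \<kappa> i = 0) \<and> (\<Sum>i<m. \<kappa> i) = N}"

text \<open>Weyl dimension formula: delta_kappa for GL(n), kappa regarded as an element of Z^n
  (entries kappa 0, ..., kappa (n-1)); product over 1 <= i < j <= n, shifted to 0-indexing.\<close>
definition delta :: "nat \<Rightarrow> (nat \<Rightarrow> nat) \<Rightarrow> real" where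
  "delta n \<kappa> = (\<Prod>j<n. \<Prod>i<j. (real (\<kappa> i) - real (\<kappa> j) + real j - real i) / (real j - real i))"

end

theory Submission imports Defs begin

definition P :: "nat \<Rightarrow> nat \<Rightarrow> real" where
  "P N r = (\<Prod>s<r. (real N + real s + 1) / (real s + 1))"

lemma P_binom: "P N r = real ((N + r) choose r)"
proof (induction r)
  case 0 then show ?case by (simp add: P_def)
next
  case (Suc r)
  have e: "real (Suc r) * real (Suc (N + r) choose Suc r) = real (Suc (N + r)) * real ((N+r) choose r)"
    using Suc_times_binomial[of r "N + r"] by (metis of_nat_mult)
  have "P N (Suc r) = P N r * ((real N + real r + 1) / (real r + 1))"
    by (simp add: P_def)
  also have "\<dots> = real (Suc (N + r) choose Suc r)"
    using e Suc by (simp add: field_simps)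
  finally show ?case by simp
qed

lemma P_ge1: "P N r \<ge> 1"
  unfolding P_def by (intro prod_ge_1) auto

lemma P_mono: "r \<le> n \<Longrightarrow> P N r \<le> P N n"
  unfolding P_def by (intro prod_mono2) auto

lemma binom_entropy:
  fixes a b :: nat assumes "a > 0" "b > 0"
  shows "real ((a + b) choose a) * (real a / real (a+b)) ^ a * (real b / real (a+b)) ^ b \<le> 1"
proof -
  let ?x = "real a / real (a+b)" and ?y = "real b / real (a+b)"
  have "real (a+b) > 0" using assms by simp
  hence "?x + ?y = 1" by (simp add: add_divide_distrib[symmetric])
  hence "1 = (?x + ?y) ^ (a+b)" by simp
  also have "\<dots> = (\<Sum>k\<le>a+b. real ((a+b) choose k) * ?x ^ k * ?y ^ (a+b-k))"
    by (rule binomial_ring)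
  also have "\<dots> \<ge> real ((a+b) choose a) * ?x ^ a * ?y ^ (a+b-a)"
    by (rule member_le_sum) auto
  finally show ?thesis by simp
qed

lemma ln_binom:
  fixes a b :: nat assumes "a > 0" "b > 0"
  shows "ln (real ((a + b) choose a)) \<le> real a * ln ((real a + real b) / real a) + real b * ln ((real a + real b) / real b)"
proof -
  let ?x = "real a / real (a+b)" and ?y = "real b / real (a+b)"
  have px: "?x > 0" "?y > 0" using assms by auto
  have c: "real ((a + b) choose a) > 0" using assms by simp
  have "ln (real ((a + b) choose a) * ?x ^ a * ?y ^ b) \<le> ln 1"
    using binom_entropy[OF assms] c px by (subst ln_le_cancel_iff) auto
  hence "ln (real ((a + b) choose a)) + real a * ln ?x + real b * ln ?y \<le> 0"
    using c px assms by (simp add: ln_mult ln_realpow add_pos_pos split: if_splits)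
  moreover have "ln ?x = - ln ((real a + real b) / real a)"
    using assms by (simp add: ln_div)
  moreover have "ln ?y = - ln ((real a + real b) / real b)"
    using assms by (simp add: ln_div)
  ultimately show ?thesis by simp
qed


lemma part_props:
  assumes "\<kappa> \<in> partitions_le m N"
  shows "\<And>i j. i \<le> j \<Longrightarrow> \<kappa> j \<le> \<kappa> i" "\<And>i. i \<ge> m \<Longrightarrow> \<kappa> i = 0" "\<And>i. \<kappa> i \<le> N"
proof -
  show "\<And>i j. i \<le> j \<Longrightarrow> \<kappa> j \<le> \<kappa> i" "\<And>i. i \<ge> m \<Longrightarrow> \<kappa> i = 0"
    using assms by (auto simp: partitions_le_def)
  fix i
  show "\<kappa> i \<le> N"
  proof (cases "i < m")
    case True
    have "\<kappa> i \<le> (\<Sum>i<m. \<kappa> i)" using True by (intro member_le_sum) auto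
    then show ?thesis using assms by (simp add: partitions_le_def)
  next
    case False then show ?thesis using assms by (auto simp: partitions_le_def)
  qed
qed

definition fac :: "(nat \<Rightarrow> nat) \<Rightarrow> nat \<Rightarrow> nat \<Rightarrow> real" where
  "fac \<kappa> i j = (real (\<kappa> i) - real (\<kappa> j) + real j - real i) / (real j - real i)"

lemma delta_fac: "delta n \<kappa> = (\<Prod>j<n. \<Prod>i<j. fac \<kappa> i j)"
  by (simp add: delta_def fac_def)

lemma fac_ge1:
  assumes "\<kappa> \<in> partitions_le m N" "i < j"
  shows "1 \<le> fac \<kappa> i j"
proof -
  have "\<kappa> j \<le> \<kappa> i" using part_props(1)[OF assms(1)] assms(2) by simp
  hence "real j - real i \<le> real (\<kappa> i) - real (\<kappa> j) + real j - real i" by simp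
  moreover have "real j - real i > 0" using assms(2) by simp
  ultimately show ?thesis unfolding fac_def by simp
qed

lemma fac_le1:
  assumes "\<kappa> \<in> partitions_le m N" "i < j"
  shows "fac \<kappa> i j \<le> real N + 1"
proof -
  have d: "real j - real i \<ge> 1" using assms(2) by simp
  have "fac \<kappa> i j = 1 + (real (\<kappa> i) - real (\<kappa> j)) / (real j - real i)"
    unfolding fac_def using d by (simp add: field_simps)
  also have "(real (\<kappa> i) - real (\<kappa> j)) / (real j - real i) \<le> (real (\<kappa> i) - real (\<kappa> j)) / 1"
    using d part_props(1)[OF assms(1), of i j] assms(2)
    by (intro divide_left_mono) auto
  also have "\<dots> \<le> real N" using part_props(3)[OF assms(1), of i] by simp
  finally show ?thesis by simp
qed

lemma fac_le2:
  assumes "\<kappa> \<in> partitions_le m N" "i < m" "m \<le> j"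
  shows "fac \<kappa> i j \<le> (real N + real (j - m) + 1) / (real (j - m) + 1)"
proof -
  have d: "real j - real i \<ge> real (j - m) + 1" using assms by simp
  have z: "\<kappa> j = 0" using part_props(2)[OF assms(1)] assms by simp
  have "fac \<kappa> i j = 1 + real (\<kappa> i) / (real j - real i)"
    unfolding fac_def using d z by (simp add: field_simps)
  also have "real (\<kappa> i) / (real j - real i) \<le> real (\<kappa> i) / (real (j - m) + 1)"
    using d by (intro divide_left_mono) auto
  also have "\<dots> \<le> real N / (real (j - m) + 1)"
    using part_props(3)[OF assms(1), of i] by (intro divide_right_mono) auto
  finally show ?thesis by (simp add: field_simps)
qed

lemma delta_bound:
  assumes "\<kappa> \<in> partitions_le m N" "m \<le> n"
  shows "1 \<le> delta n \<kappa>" "delta n \<kappa> \<le> (real N + 1) ^ (m * m) * P N n ^ m"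
proof -
  let ?g = "\<lambda>j. \<Prod>i<j. fac \<kappa> i j"
  have g1: "1 \<le> ?g j" for j by (intro prod_ge_1) (auto intro: fac_ge1[OF assms(1)])
  have g0: "0 \<le> ?g j" for j using g1[of j] by linarith
  show "1 \<le> delta n \<kappa>" unfolding delta_fac by (intro prod_ge_1 g1)
  have split: "delta n \<kappa> = (\<Prod>j<m. ?g j) * (\<Prod>j\<in>{m..<n}. ?g j)"
    unfolding delta_fac
    using prod.atLeastLessThan_concat[of 0 m n ?g] assms(2) by (simp add: atLeast0LessThan)
  have A: "(\<Prod>j<m. ?g j) \<le> (\<Prod>j<m. (real N + 1) ^ m)"
  proof (intro prod_mono conjI)
    fix j assume j: "j \<in> {..<m}"
    show "0 \<le> ?g j" using g1[of j] by linarith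
    have "?g j \<le> (real N + 1) ^ j"
    proof (rule prod_le_power)
      fix i assume "i \<in> {..<j}"
      hence "i < j" by simp
      thus "0 \<le> fac \<kappa> i j \<and> fac \<kappa> i j \<le> real N + 1"
        using fac_ge1[OF assms(1)] fac_le1[OF assms(1)] by (meson order_trans zero_le_one)
    qed auto
    also have "\<dots> \<le> (real N + 1) ^ m" using j by (intro power_increasing) auto
    finally show "?g j \<le> (real N + 1) ^ m" .
  qed
  have hB: "?g j \<le> ((real N + real (j - m) + 1) / (real (j - m) + 1)) ^ m" if j: "j \<in> {m..<n}" for j
  proof -
    have "?g j = (\<Prod>i<m. fac \<kappa> i j) * (\<Prod>i\<in>{m..<j}. fac \<kappa> i j)"
      unfolding lessThan_atLeast0
      using prod.atLeastLessThan_concat[of 0 m j "\<lambda>i. fac \<kappa> i j"] j by simp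
    also have "(\<Prod>i\<in>{m..<j}. fac \<kappa> i j) = 1"
      using part_props(2)[OF assms(1)] by (intro prod.neutral) (auto simp: fac_def)
    also have "(\<Prod>i<m. fac \<kappa> i j) \<le> (\<Prod>i<m. (real N + real (j - m) + 1) / (real (j - m) + 1))"
    proof (intro prod_mono conjI)
      fix i assume "i \<in> {..<m}"
      hence i: "i < m" "i < j" using j by auto
      show "0 \<le> fac \<kappa> i j" using fac_ge1[OF assms(1) i(2)] by linarith
      show "fac \<kappa> i j \<le> (real N + real (j - m) + 1) / (real (j - m) + 1)"
        using fac_le2[OF assms(1) i(1)] j by simp
    qed
    finally show ?thesis by simp
  qed
  have B: "(\<Prod>j\<in>{m..<n}. ?g j) \<le> (\<Prod>j\<in>{m..<n}. ((real N + real (j - m) + 1) / (real (j - m) + 1)) ^ m)"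
  proof (intro prod_mono conjI)
    fix j assume "j \<in> {m..<n}"
    thus "0 \<le> ?g j" "?g j \<le> ((real N + real (j - m) + 1) / (real (j - m) + 1)) ^ m"
      using hB g1[of j] by auto
  qed
  have "(\<Prod>j\<in>{m..<n}. ((real N + real (j - m) + 1) / (real (j - m) + 1)) ^ m)
        = (\<Prod>j\<in>{m..<n}. (real N + real (j - m) + 1) / (real (j - m) + 1)) ^ m"
    by (simp add: prod_power_distrib)
  also have "(\<Prod>j\<in>{m..<n}. (real N + real (j - m) + 1) / (real (j - m) + 1)) = P N (n - m)"
    using prod.shift_bounds_nat_ivl[of "\<lambda>j. (real N + real (j - m) + 1) / (real (j - m) + 1)" 0 m "n - m"] assms(2)
    by (simp add: P_def lessThan_atLeast0)
  finally have eqB: "(\<Prod>j\<in>{m..<n}. ((real N + real (j - m) + 1) / (real (j - m) + 1)) ^ m) = P N (n - m) ^ m" .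
  have "P N (n - m) ^ m \<le> P N n ^ m"
    using P_mono[of "n - m" n N] P_ge1[of N "n-m"] by (intro power_mono) auto
  hence B': "(\<Prod>j\<in>{m..<n}. ?g j) \<le> P N n ^ m" using B eqB by linarith
  have "delta n \<kappa> \<le> (\<Prod>j<m. (real N + 1) ^ m) * P N n ^ m"
    unfolding split
  proof (rule mult_mono[OF A B'])
    show "0 \<le> (\<Prod>j<m. (real N + 1) ^ m)" by (intro prod_nonneg) auto
    show "0 \<le> (\<Prod>j\<in>{m..<n}. ?g j)" by (rule prod_nonneg) (rule g0)
  qed
  thus "delta n \<kappa> \<le> (real N + 1) ^ (m * m) * P N n ^ m"
    by (simp add: power_mult)
qed


lemma parts_card:
  "finite (partitions_le m N) \<and> card (partitions_le m N) \<le> (N + 1) ^ m"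
proof -
  let ?r = "\<lambda>\<kappa>::nat\<Rightarrow>nat. restrict \<kappa> {..<m}"
  have inj: "inj_on ?r (partitions_le m N)"
  proof (rule inj_onI)
    fix x y assume x: "x \<in> partitions_le m N" and y: "y \<in> partitions_le m N" and e: "?r x = ?r y"
    show "x = y"
    proof
      fix i show "x i = y i"
      proof (cases "i < m")
        case True then show ?thesis using fun_cong[OF e, of i] by simp
      next
        case False then show ?thesis using part_props(2)[OF x] part_props(2)[OF y] by simp
      qed
    qed
  qed
  have sub: "?r ` partitions_le m N \<subseteq> PiE {..<m} (\<lambda>_. {..N})"
    using part_props(3) by (auto simp: PiE_def extensional_def)
  have fin: "finite (PiE {..<m} (\<lambda>_. {..N}))" by (intro finite_PiE) auto
  have "finite (?r ` partitions_le m N)" using finite_subset[OF sub fin] .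
  hence f: "finite (partitions_le m N)" using finite_imageD[OF _ inj] by blast
  have "card (partitions_le m N) = card (?r ` partitions_le m N)" using card_image[OF inj] by simp
  also have "\<dots> \<le> card (PiE {..<m} (\<lambda>_. {..N}))" by (rule card_mono[OF fin sub])
  also have "\<dots> = (N + 1) ^ m" by (simp add: card_PiE)
  finally show ?thesis using f by simp
qed

lemma parts_nonempty:
  assumes "m \<ge> 1" shows "(\<lambda>i. if i = 0 then N else 0) \<in> partitions_le m N"
proof -
  have "(\<Sum>i<m. (if i = 0 then N else 0)) = N"
    using assms by (subst sum.delta) auto
  thus ?thesis unfolding partitions_le_def using assms by auto
qed

lemma ln_sum_bound:
  assumes "m \<ge> 1" "m \<le> n" "N > 0"
  shows "ln (\<Sum>\<kappa>\<in>partitions_le m N. delta n \<kappa>)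
     \<le> real (m + m * m) * ln (real N + 1) + real m * (real n * ln ((real n + real N) / real n) + real N * ln ((real n + real N) / real N))"
proof -
  let ?S = "\<Sum>\<kappa>\<in>partitions_le m N. delta n \<kappa>"
  let ?B = "(real N + 1) ^ (m * m) * P N n ^ m"
  have fin: "finite (partitions_le m N)" and card: "card (partitions_le m N) \<le> (N + 1) ^ m"
    using parts_card by auto
  have S1: "?S \<ge> 1"
  proof -
    have "1 \<le> delta n (\<lambda>i. if i = 0 then N else 0)"
      using delta_bound(1)[OF parts_nonempty[OF assms(1)] assms(2)] .
    also have "\<dots> \<le> ?S"
      using fin parts_nonempty[OF assms(1)] delta_bound(1)[OF _ assms(2)]
      by (intro member_le_sum) (auto intro: order_trans[OF zero_le_one])
    finally show ?thesis .
  qed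
  have "?S \<le> (\<Sum>\<kappa>\<in>partitions_le m N. ?B)"
    using delta_bound(2)[OF _ assms(2)] by (intro sum_mono) auto
  also have "\<dots> = real (card (partitions_le m N)) * ?B" by simp
  also have "\<dots> \<le> real ((N + 1) ^ m) * ?B"
    using card P_ge1[of N n] by (intro mult_right_mono) (auto simp del: of_nat_power)
  finally have SB: "?S \<le> (real N + 1) ^ m * ?B" by (simp add: add.commute)
  have Ppos: "P N n > 0" using P_ge1[of N n] by linarith
  have "ln ?S \<le> ln ((real N + 1) ^ m * ?B)"
    using SB S1 by (subst ln_le_cancel_iff) auto
  also have "\<dots> = real m * ln (real N + 1) + real (m * m) * ln (real N + 1) + real m * ln (P N n)"
    using Ppos by (simp add: ln_mult ln_realpow)
  finally have X: "ln ?S \<le> real m * ln (real N + 1) + real (m * m) * ln (real N + 1) + real m * ln (P N n)" .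
  have lnP: "ln (P N n) \<le> real n * ln ((real n + real N) / real n) + real N * ln ((real n + real N) / real N)"
  proof -
    have "P N n = real ((n + N) choose n)" by (simp add: P_binom add.commute)
    thus ?thesis using ln_binom[of n N] assms by simp
  qed
  have "real m * ln (P N n) \<le> real m * (real n * ln ((real n + real N) / real n) + real N * ln ((real n + real N) / real N))"
    using lnP by (intro mult_left_mono) auto
  thus ?thesis using X by (simp add: algebra_simps)
qed


theorem lemma6p1:
  fixes m :: nat and \<rho> :: real and nn kk :: "nat \<Rightarrow> nat"
  assumes "m \<ge> 1" and "\<rho> > 0"
    and "filterlim nn at_top sequentially"
    and "filterlim kk at_top sequentially"
    and "(\<lambda>t. real (nn t) / (2 * real (kk t))) \<longlonglongrightarrow> 1 / \<rho>"
  shows "limsup (\<lambda>t. ereal (ln (\<Sum>\<kappa>\<in>partitions_le m (2 * kk t). delta (nn t) \<kappa>) / real (nn t)))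
           \<le> ereal (real m * ((1 + \<rho>) * ln (1 + \<rho>) - \<rho> * ln \<rho>))"
proof -
  define x where "x t = real (2 * kk t) / real (nn t)" for t
  define b where "b t = real (m + m * m) * (ln (real (2 * kk t) + 1) / real (nn t))
     + real m * (ln (1 + x t) + x t * ln (1 + 1 / x t))" for t
  define L where "L = real m * (ln (1 + \<rho>) + \<rho> * ln (1 + 1 / \<rho>))"
  have xlim: "x \<longlonglongrightarrow> \<rho>"
  proof -
    have "(\<lambda>t. inverse (real (nn t) / (2 * real (kk t)))) \<longlonglongrightarrow> inverse (1 / \<rho>)"
      using assms(2,5) by (intro tendsto_inverse) auto
    moreover have "(\<lambda>t. inverse (real (nn t) / (2 * real (kk t)))) = x"
      by (auto simp: x_def fun_eq_iff)
    ultimately show ?thesis by simp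
  qed
  have nreal: "filterlim (\<lambda>t. real (nn t)) at_top sequentially"
    using filterlim_compose[OF filterlim_real_sequentially assms(3)] by (simp add: o_def)
  have kreal: "filterlim (\<lambda>t. real (kk t)) at_top sequentially"
    using filterlim_compose[OF filterlim_real_sequentially assms(4)] by (simp add: o_def)
  have Nreal: "filterlim (\<lambda>t. real (2 * kk t) + 1) at_top sequentially"
    by (rule filterlim_at_top_mono[OF kreal]) auto
  have inv_n: "(\<lambda>t. inverse (real (nn t))) \<longlonglongrightarrow> 0"
    by (rule tendsto_inverse_0_at_top[OF nreal])
  have lnN: "(\<lambda>t. ln (real (2 * kk t) + 1) / (real (2 * kk t) + 1)) \<longlonglongrightarrow> 0"
    using filterlim_compose[OF ln_x_over_x_tendsto_0 Nreal] by (simp add: o_def)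
  have ev_n: "eventually (\<lambda>t. m + 1 \<le> nn t) sequentially"
    using assms(3) by (simp add: filterlim_at_top)
  have ev_k: "eventually (\<lambda>t. 1 \<le> kk t) sequentially"
    using assms(4) by (simp add: filterlim_at_top)
  have r1: "(\<lambda>t. ln (real (2 * kk t) + 1) / real (nn t)) \<longlonglongrightarrow> 0"
  proof -
    have "(\<lambda>t. ln (real (2 * kk t) + 1) / (real (2 * kk t) + 1) * (x t + inverse (real (nn t)))) \<longlonglongrightarrow> 0 * (\<rho> + 0)"
      by (intro tendsto_intros lnN xlim inv_n)
    moreover have "eventually (\<lambda>t. ln (real (2 * kk t) + 1) / (real (2 * kk t) + 1) * (x t + inverse (real (nn t)))
        = ln (real (2 * kk t) + 1) / real (nn t)) sequentially"
      using ev_n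
    proof (rule eventually_mono)
      fix t assume "m + 1 \<le> nn t"
      hence n0: "real (nn t) > 0" by simp
      have p: "real (2 * kk t) + 1 > 0" by simp
      have "x t + inverse (real (nn t)) = (real (2 * kk t) + 1) / real (nn t)"
        using n0 by (simp add: x_def add_divide_distrib divide_inverse distrib_right)
      thus "ln (real (2 * kk t) + 1) / (real (2 * kk t) + 1) * (x t + inverse (real (nn t)))
        = ln (real (2 * kk t) + 1) / real (nn t)"
        using p by simp
    qed
    ultimately show ?thesis by (simp add: tendsto_cong)
  qed
  have pr: "1 + 1 / \<rho> \<noteq> 0" using assms(2)
    by (metis add_pos_pos divide_pos_pos less_irrefl zero_less_one)
  have blim: "b \<longlonglongrightarrow> L"
  proof -
    have "b \<longlonglongrightarrow> real (m + m * m) * 0 + real m * (ln (1 + \<rho>) + \<rho> * ln (1 + 1 / \<rho>))"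
      unfolding b_def using assms(2) pr
      by (intro tendsto_intros r1 xlim) (auto simp: add_pos_pos)
    thus ?thesis by (simp add: L_def)
  qed
  have Leq: "L = real m * ((1 + \<rho>) * ln (1 + \<rho>) - \<rho> * ln \<rho>)"
  proof -
    have "ln (1 + 1 / \<rho>) = ln (1 + \<rho>) - ln \<rho>"
    proof -
      have "1 + 1 / \<rho> = (1 + \<rho>) / \<rho>" using assms(2) by (simp add: field_simps)
      thus ?thesis using assms(2) by (simp add: ln_div)
    qed
    thus ?thesis unfolding L_def by (simp add: algebra_simps flip: distrib_left)
  qed
  have ev: "eventually (\<lambda>t. ereal (ln (\<Sum>\<kappa>\<in>partitions_le m (2 * kk t). delta (nn t) \<kappa>) / real (nn t)) \<le> ereal (b t)) sequentially"
    using eventually_conj[OF ev_n ev_k]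
  proof (rule eventually_mono)
    fix t assume h: "m + 1 \<le> nn t \<and> 1 \<le> kk t"
    define n where "n = nn t"
    define N where "N = 2 * kk t"
    have n0: "real n > 0" and N0: "real N > 0" using h by (auto simp: n_def N_def)
    have "ln (\<Sum>\<kappa>\<in>partitions_le m N. delta n \<kappa>) / real n
      \<le> (real (m + m * m) * ln (real N + 1) + real m * (real n * ln ((real n + real N) / real n) + real N * ln ((real n + real N) / real N))) / real n"
      using ln_sum_bound[OF assms(1), of n N] h n0 by (intro divide_right_mono) (auto simp: n_def N_def)
    also have "\<dots> = b t"
    proof -
      have e1: "(real n + real N) / real n = 1 + x t" and e2: "(real n + real N) / real N = 1 + 1 / x t"
        using n0 N0 by (auto simp: x_def n_def N_def field_simps)
      have e3: "real N = x t * real n" using n0 by (simp add: x_def n_def N_def)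
      show ?thesis unfolding e1 e2 unfolding b_def N_def[symmetric] n_def[symmetric]
        unfolding e3 using n0 by (simp add: field_simps)
    qed
    finally show "ereal (ln (\<Sum>\<kappa>\<in>partitions_le m (2 * kk t). delta (nn t) \<kappa>) / real (nn t)) \<le> ereal (b t)"
      by (simp add: n_def N_def)
  qed
  have "limsup (\<lambda>t. ereal (ln (\<Sum>\<kappa>\<in>partitions_le m (2 * kk t). delta (nn t) \<kappa>) / real (nn t)))
      \<le> limsup (\<lambda>t. ereal (b t))"
    by (rule Limsup_mono[OF ev])
  also have "limsup (\<lambda>t. ereal (b t)) = ereal L"
    by (rule lim_imp_Limsup) (auto intro: tendsto_ereal blim)
  finally show ?thesis by (simp add: Leq)
qed

end
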